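(* A random joint choice rule $p$ on a finite set $X$ is consistent with state independent consumption dependent random utility if and only if it satisfies complete monotonicity, marginality, and choice set independence.
   Context: $X$ is finite, $\mathcal{X}$ the nonempty subsets of $X$, $\mathcal{L}(X)$ the linear orders on $X$, $N(x,A)=\{\succ: x\succ y\ \forall y\in A\setminus\{x\}\}$. A random joint choice rule assigns to each $A,B\in\mathcal{X}$ and $(x,y)\in A\times B$ a number $p(x,y,A,B)\ge0$ with $\sum_{x\in A}\sum_{y\in B}p(x,y,A,B)=1$. Its Möbius inverse $q$ is defined by $p(x,y,A,B)=\sum_{A\subseteq A'\subseteq X}\sum_{B\subseteq B'\subseteq X}q(x,y,A',B')$. A state independent transition function is a map $x\mapsto t(x)\in\Delta(\mathcal{L}(X))$ (a transition function not depending on the preference input), with $t_{\succ'}(x)$ the probability of $\succ'$. $p$ is consistent with state independent consumption dependent random utility if there exist $\nu\in\Delta(\mathcal{L}(X))$ and a state independent transition function $t$ with $p(x,y,A,B)=\sum_{\succ\in N(x,A)}\sum_{\succ'\in N(y,B)}\nu(\succ)t_{\succ'}(x)$ for all $A,B\in\mathcal{X}$, $(x,y)\in A\times B$. Complete monotonicity: $q(x,y,A,B)\ge0$ for all arguments. Marginality: for all $A,B,C\in\mathcal{X}$ and $x\in A$, $\sum_{y\in B}p(x,y,A,B)=\sum_{y\in C}p(x,y,A,C)$. Write $p(x,A)=\sum_{y\in X}p(x,y,A,X)$ (under marginality this equals $\sum_{y\in B}p(x,y,A,B)$ for any $B$). Choice set independence: for every $B\in\mathcal{X}$, $y\in B$,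 and all $A,A'\in\mathcal{X}$ containing $x$ with $p(x,A)>0$ and $p(x,A')>0$, $\frac{p(x,y,A,B)}{p(x,A)}=\frac{p(x,y,A',B)}{p(x,A')}$. *)

theory Defs
  imports Complex_Main
begin

definition nonempty_subsets :: "'a set \<Rightarrow> 'a set set" where
  "nonempty_subsets X = {A. A \<subseteq> X \<and> A \<noteq> {}}"

definition lin_orders :: "'a set \<Rightarrow> 'a rel set" where
  "lin_orders X = {r. strict_linear_order_on X r \<and> r \<subseteq> X \<times> X}"

definition N_set :: "'a set \<Rightarrow> 'a \<Rightarrow> 'a set \<Rightarrow> 'a rel set" where
  "N_set X x A = {r \<in> lin_orders X. \<forall>y \<in> A - {x}. (x, y) \<in> r}"

definition distr :: "'b set \<Rightarrow> ('b \<Rightarrow> real) set" where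
  "distr S = {f. (\<forall>s\<in>S. 0 \<le> f s) \<and> sum f S = 1}"

definition random_joint_choice_rule ::
  "'a set \<Rightarrow> ('a \<Rightarrow> 'a \<Rightarrow> 'a set \<Rightarrow> 'a set \<Rightarrow> real) \<Rightarrow> bool" where
  "random_joint_choice_rule X p \<longleftrightarrow>
     (\<forall>A \<in> nonempty_subsets X. \<forall>B \<in> nonempty_subsets X.
        (\<forall>x\<in>A. \<forall>y\<in>B. 0 \<le> p x y A B) \<and>
        (\<Sum>x\<in>A. \<Sum>y\<in>B. p x y A B) = 1)"

text \<open>Moebius inverse q of p (explicit inversion formula of
  p(x,y,A,B) = sum over A \<subseteq> A' \<subseteq> X, B \<subseteq> B' \<subseteq> X of q(x,y,A',B')).\<close>
definition mobius_inv ::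
  "'a set \<Rightarrow> ('a \<Rightarrow> 'a \<Rightarrow> 'a set \<Rightarrow> 'a set \<Rightarrow> real) \<Rightarrow> 'a \<Rightarrow> 'a \<Rightarrow> 'a set \<Rightarrow> 'a set \<Rightarrow> real" where
  "mobius_inv X p x y A B =
     (\<Sum>A' \<in> {A'. A \<subseteq> A' \<and> A' \<subseteq> X}. \<Sum>B' \<in> {B'. B \<subseteq> B' \<and> B' \<subseteq> X}.
        (-1) ^ (card (A' - A) + card (B' - B)) * p x y A' B')"

definition state_indep_cdru ::
  "'a set \<Rightarrow> ('a \<Rightarrow> 'a \<Rightarrow> 'a set \<Rightarrow> 'a set \<Rightarrow> real) \<Rightarrow> bool" where
  "state_indep_cdru X p \<longleftrightarrow>
     (\<exists>(\<nu> :: 'a rel \<Rightarrow> real) (t :: 'a \<Rightarrow> 'a rel \<Rightarrow> real).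
        \<nu> \<in> distr (lin_orders X) \<and> (\<forall>x\<in>X. t x \<in> distr (lin_orders X)) \<and>
        (\<forall>A \<in> nonempty_subsets X. \<forall>B \<in> nonempty_subsets X. \<forall>x\<in>A. \<forall>y\<in>B.
           p x y A B = (\<Sum>r \<in> N_set X x A. \<Sum>r' \<in> N_set X y B. \<nu> r * t x r')))"

definition complete_monotonicity ::
  "'a set \<Rightarrow> ('a \<Rightarrow> 'a \<Rightarrow> 'a set \<Rightarrow> 'a set \<Rightarrow> real) \<Rightarrow> bool" where
  "complete_monotonicity X p \<longleftrightarrow>
     (\<forall>A \<in> nonempty_subsets X. \<forall>B \<in> nonempty_subsets X. \<forall>x\<in>A. \<forall>y\<in>B.
        0 \<le> mobius_inv X p x y A B)"

definition marginality ::
  "'a set \<Rightarrow> ('a \<Rightarrow> 'a \<Rightarrow> 'a set \<Rightarrow> 'a set \<Rightarrow> real) \<Rightarrow> bool" where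
  "marginality X p \<longleftrightarrow>
     (\<forall>A \<in> nonempty_subsets X. \<forall>B \<in> nonempty_subsets X. \<forall>C \<in> nonempty_subsets X. \<forall>x\<in>A.
        (\<Sum>y\<in>B. p x y A B) = (\<Sum>y\<in>C. p x y A C))"

definition marg_p ::
  "'a set \<Rightarrow> ('a \<Rightarrow> 'a \<Rightarrow> 'a set \<Rightarrow> 'a set \<Rightarrow> real) \<Rightarrow> 'a \<Rightarrow> 'a set \<Rightarrow> real" where
  "marg_p X p x A = (\<Sum>y\<in>X. p x y A X)"

definition choice_set_independence ::
  "'a set \<Rightarrow> ('a \<Rightarrow> 'a \<Rightarrow> 'a set \<Rightarrow> 'a set \<Rightarrow> real) \<Rightarrow> bool" where
  "choice_set_independence X p \<longleftrightarrow>
     (\<forall>B \<in> nonempty_subsets X. \<forall>y\<in>B. \<forall>x\<in>X.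
        \<forall>A \<in> nonempty_subsets X. \<forall>A' \<in> nonempty_subsets X.
          x \<in> A \<longrightarrow> x \<in> A' \<longrightarrow> marg_p X p x A > 0 \<longrightarrow> marg_p X p x A' > 0 \<longrightarrow>
          p x y A B / marg_p X p x A = p x y A' B / marg_p X p x A')"

end

theory Submission
  imports Defs "HOL-Combinatorics.Multiset_Permutations"
begin


lemma alt_pow:
  assumes "finite V"
  shows "(\<Sum>U\<in>Pow V. (-1::real) ^ card U) = (if V = {} then 1 else 0)"
  using assms
proof (induction V rule: finite_induct)
  case empty then show ?case by simp
next
  case (insert v V)
  have fin: "finite (Pow V)" "finite (insert v ` Pow V)" using insert by auto
  have disj: "Pow V \<inter> insert v ` Pow V = {}" using insert by auto
  have inj: "inj_on (insert v) (Pow V)" using insert unfolding inj_on_def by (metis Pow_iff insert_ident subsetD)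
  have "(\<Sum>U\<in>Pow (insert v V). (-1::real) ^ card U)
      = (\<Sum>U\<in>Pow V. (-1::real) ^ card U) + (\<Sum>U\<in>insert v ` Pow V. (-1::real) ^ card U)"
    by (simp add: Pow_insert sum.union_disjoint[OF fin disj])
  also have "(\<Sum>U\<in>insert v ` Pow V. (-1::real) ^ card U) = (\<Sum>U\<in>Pow V. (-1::real) ^ card (insert v U))"
    by (simp add: sum.reindex[OF inj])
  also have "\<dots> = (\<Sum>U\<in>Pow V. - ((-1::real) ^ card U))"
  proof (rule sum.cong)
    fix U assume "U \<in> Pow V"
    then have "finite U" "v \<notin> U" using insert finite_subset by auto
    then show "(-1::real) ^ card (insert v U) = - ((-1::real) ^ card U)" by simp
  qed simp
  finally show ?case by (simp add: sum_negf)
qed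

lemma alt_top:
  assumes "finite T" "A \<subseteq> T"
  shows "(\<Sum>S\<in>{S. A \<subseteq> S \<and> S \<subseteq> T}. (-1::real) ^ card (T - S)) = (if A = T then 1 else 0)"
proof -
  have "(\<Sum>S\<in>{S. A \<subseteq> S \<and> S \<subseteq> T}. (-1::real) ^ card (T - S)) = (\<Sum>U\<in>Pow (T - A). (-1::real) ^ card U)"
    by (rule sum.reindex_bij_witness[where i = "\<lambda>U. T - U" and j = "\<lambda>S. T - S"]) (use assms in auto)
  also have "\<dots> = (if A = T then 1 else 0)" using assms by (simp add: alt_pow)
  finally show ?thesis .
qed

lemma alt_bot:
  assumes "finite T" "A \<subseteq> T"
  shows "(\<Sum>S\<in>{S. A \<subseteq> S \<and> S \<subseteq> T}. (-1::real) ^ card (S - A)) = (if A = T then 1 else 0)"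
proof -
  have "(\<Sum>S\<in>{S. A \<subseteq> S \<and> S \<subseteq> T}. (-1::real) ^ card (S - A)) = (\<Sum>U\<in>Pow (T - A). (-1::real) ^ card U)"
    by (rule sum.reindex_bij_witness[where i = "\<lambda>U. U \<union> A" and j = "\<lambda>S. S - A"]) (use assms in auto)
  also have "\<dots> = (if A = T then 1 else 0)" using assms by (simp add: alt_pow)
  finally show ?thesis .
qed

lemma mobius1:
  fixes f g :: "'a set \<Rightarrow> real"
  assumes "finite X" "A \<subseteq> X"
    and g: "\<And>S. A \<subseteq> S \<Longrightarrow> S \<subseteq> X \<Longrightarrow> g S = (\<Sum>T\<in>{T. S \<subseteq> T \<and> T \<subseteq> X}. (-1) ^ card (T - S) * f T)"
  shows "f A = (\<Sum>S\<in>{S. A \<subseteq> S \<and> S \<subseteq> X}. g S)"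
proof -
  have fin: "finite {S. A \<subseteq> S \<and> S \<subseteq> X}" by (rule finite_subset[of _ "Pow X"]) (use assms in auto)
  have "(\<Sum>S\<in>{S. A \<subseteq> S \<and> S \<subseteq> X}. g S)
      = (\<Sum>S\<in>{S. A \<subseteq> S \<and> S \<subseteq> X}. \<Sum>T\<in>{T. T \<in> {S. A \<subseteq> S \<and> S \<subseteq> X} \<and> S \<subseteq> T}. (-1) ^ card (T - S) * f T)"
    by (rule sum.cong) (auto simp: g intro!: sum.cong)
  also have "\<dots> = (\<Sum>T\<in>{S. A \<subseteq> S \<and> S \<subseteq> X}. \<Sum>S\<in>{S. S \<in> {S. A \<subseteq> S \<and> S \<subseteq> X} \<and> S \<subseteq> T}. (-1) ^ card (T - S) * f T)"
    by (rule sum.swap_restrict[OF fin fin])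
  also have "\<dots> = (\<Sum>T\<in>{S. A \<subseteq> S \<and> S \<subseteq> X}. f T * (\<Sum>S\<in>{S. A \<subseteq> S \<and> S \<subseteq> T}. (-1) ^ card (T - S)))"
    by (rule sum.cong) (auto simp: sum_distrib_left mult.commute intro!: sum.cong)
  also have "\<dots> = (\<Sum>T\<in>{S. A \<subseteq> S \<and> S \<subseteq> X}. if T = A then f A else 0)"
    by (rule sum.cong) (use assms in \<open>auto simp: alt_top finite_subset split: if_splits\<close>)
  also have "\<dots> = f A" using fin assms by (simp add: sum.delta')
  finally show ?thesis by simp
qed

lemma mobius2:
  fixes f g :: "'a set \<Rightarrow> real"
  assumes "finite X" "A \<subseteq> X"
    and f: "\<And>T. A \<subseteq> T \<Longrightarrow> T \<subseteq> X \<Longrightarrow> f T = (\<Sum>S\<in>{S. T \<subseteq> S \<and> S \<subseteq> X}. g S)"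
  shows "(\<Sum>T\<in>{T. A \<subseteq> T \<and> T \<subseteq> X}. (-1) ^ card (T - A) * f T) = g A"
proof -
  have fin: "finite {S. A \<subseteq> S \<and> S \<subseteq> X}" by (rule finite_subset[of _ "Pow X"]) (use assms in auto)
  have "(\<Sum>T\<in>{T. A \<subseteq> T \<and> T \<subseteq> X}. (-1) ^ card (T - A) * f T)
     = (\<Sum>T\<in>{S. A \<subseteq> S \<and> S \<subseteq> X}. \<Sum>S\<in>{S. S \<in> {S. A \<subseteq> S \<and> S \<subseteq> X} \<and> T \<subseteq> S}. (-1) ^ card (T - A) * g S)"
    by (rule sum.cong) (auto simp: f sum_distrib_left intro!: sum.cong)
  also have "\<dots> = (\<Sum>S\<in>{S. A \<subseteq> S \<and> S \<subseteq> X}. \<Sum>T\<in>{T. T \<in> {S. A \<subseteq> S \<and> S \<subseteq> X} \<and> T \<subseteq> S}. (-1) ^ card (T - A) * g S)"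
    by (rule sum.swap_restrict[OF fin fin])
  also have "\<dots> = (\<Sum>S\<in>{S. A \<subseteq> S \<and> S \<subseteq> X}. g S * (\<Sum>T\<in>{T. A \<subseteq> T \<and> T \<subseteq> S}. (-1) ^ card (T - A)))"
    by (rule sum.cong) (auto simp: sum_distrib_left mult.commute intro!: sum.cong)
  also have "\<dots> = (\<Sum>S\<in>{S. A \<subseteq> S \<and> S \<subseteq> X}. if S = A then g A else 0)"
    by (rule sum.cong) (use assms in \<open>auto simp: alt_bot finite_subset split: if_splits\<close>)
  also have "\<dots> = g A" using fin assms by (simp add: sum.delta')
  finally show ?thesis .
qed





definition rel_of :: "'a list \<Rightarrow> 'a rel" where
  "rel_of l = {(a,b). \<exists>l1 l2. l = l1 @ a # l2 \<and> b \<in> set l2}"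

lemma rel_of_split:
  assumes "distinct (l1 @ x # l2)"
  shows "(x,y) \<in> rel_of (l1 @ x # l2) \<longleftrightarrow> y \<in> set l2"
proof
  assume "(x,y) \<in> rel_of (l1 @ x # l2)"
  then obtain m1 m2 where m: "l1 @ x # l2 = m1 @ x # m2" "y \<in> set m2" unfolding rel_of_def by blast
  have "x \<notin> set l1" "x \<notin> set l2" using assms by auto
  then have "m2 = l2" using m(1) append_Cons_eq_iff[of x l1 l2 m1 m2] by simp
  with m show "y \<in> set l2" by simp
qed (auto simp: rel_of_def)

lemma rel_of_lin:
  assumes "distinct l"
  shows "rel_of l \<in> lin_orders (set l)"
proof -
  have sub: "rel_of l \<subseteq> set l \<times> set l" unfolding rel_of_def by auto
  have irr: "irrefl (rel_of l)"
    unfolding irrefl_def rel_of_def using assms by auto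
  have tr: "trans (rel_of l)"
  proof (rule transI)
    fix a b c assume ab: "(a,b) \<in> rel_of l" and bc: "(b,c) \<in> rel_of l"
    from ab obtain l1 l2 where l: "l = l1 @ a # l2" "b \<in> set l2" unfolding rel_of_def by blast
    from l(2) obtain u v where l2: "l2 = u @ b # v" by (meson split_list)
    have l': "l = (l1 @ a # u) @ b # v" using l l2 by simp
    from bc have "c \<in> set v"
      using rel_of_split[of "l1 @ a # u" b v] l' assms by simp
    then have "l = l1 @ a # (u @ b # v) \<and> c \<in> set (u @ b # v)" using l l2 by simp
    then show "(a,c) \<in> rel_of l" unfolding rel_of_def by blast
  qed
  have tot: "total_on (set l) (rel_of l)"
  proof (unfold total_on_def, intro ballI impI)
    fix a b assume a: "a \<in> set l" and b: "b \<in> set l" and ne: "a \<noteq> b"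
    from a obtain l1 l2 where l: "l = l1 @ a # l2" by (meson split_list)
    show "(a,b) \<in> rel_of l \<or> (b,a) \<in> rel_of l"
    proof (cases "b \<in> set l2")
      case True then show ?thesis using l unfolding rel_of_def by auto
    next
      case False
      then have "b \<in> set l1" using b ne l by auto
      then obtain u v where "l1 = u @ b # v" by (meson split_list)
      then have "l = u @ b # (v @ a # l2)" using l by simp
      then show ?thesis unfolding rel_of_def by fastforce
    qed
  qed
  show ?thesis unfolding lin_orders_def strict_linear_order_on_def using sub irr tr tot by auto
qed


lemma sum_perms_cons:
  assumes "finite U" "U \<noteq> {}"
  shows "(\<Sum>l\<in>permutations_of_set U. f l) = (\<Sum>z\<in>U. \<Sum>l\<in>permutations_of_set (U - {z}). f (z # l))"
proof -
  have "(\<Sum>l\<in>permutations_of_set U. f l) = (\<Sum>(z,l)\<in>Sigma U (\<lambda>z. permutations_of_set (U - {z})). f (z # l))"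
  proof (rule sum.reindex_bij_witness[where i = "\<lambda>(z,l). z # l" and j = "\<lambda>l. (hd l, tl l)"])
    fix l assume l: "l \<in> permutations_of_set U"
    then have ne: "l \<noteq> []" using assms by (auto simp: permutations_of_set_def)
    then have e: "hd l # tl l = l" by simp
    show "(case (hd l, tl l) of (z, l) \<Rightarrow> z # l) = l" using e by simp
    have "distinct (hd l # tl l)" using e l by (simp add: permutations_of_set_def)
    moreover have "set l = insert (hd l) (set (tl l))"
      by (subst e[symmetric]) simp
    ultimately show "(hd l, tl l) \<in> Sigma U (\<lambda>z. permutations_of_set (U - {z}))"
      using l by (auto simp: permutations_of_set_def)
  next
    fix t assume t: "t \<in> Sigma U (\<lambda>z. permutations_of_set (U - {z}))"
    obtain z l where t': "t = (z,l)" by (cases t) auto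
    with t have "z \<in> U" "set l = U - {z}" "distinct l" by (auto simp: permutations_of_set_def)
    then show "(case (case t of (z, l) \<Rightarrow> z # l) of l \<Rightarrow> (hd l, tl l)) = t"
      and "(case t of (z, l) \<Rightarrow> z # l) \<in> permutations_of_set U"
      using t' by (auto simp: permutations_of_set_def)
  next
    fix a assume "a \<in> permutations_of_set U"
    then have "a \<noteq> []" using assms by (auto simp: permutations_of_set_def)
    then show "(case (hd a, tl a) of (z, l) \<Rightarrow> f (z # l)) = f a" by simp
  qed
  also have "\<dots> = (\<Sum>z\<in>U. \<Sum>l\<in>permutations_of_set (U - {z}). f (z # l))"
    by (rule sum.Sigma[symmetric]) (use assms in auto)
  finally show ?thesis .
qed

lemma sum_perms_snoc:
  assumes "finite U" "U \<noteq> {}"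
  shows "(\<Sum>l\<in>permutations_of_set U. f l) = (\<Sum>z\<in>U. \<Sum>l\<in>permutations_of_set (U - {z}). f (l @ [z]))"
proof -
  have "(\<Sum>l\<in>permutations_of_set U. f l) = (\<Sum>(z,l)\<in>Sigma U (\<lambda>z. permutations_of_set (U - {z})). f (l @ [z]))"
  proof (rule sum.reindex_bij_witness[where i = "\<lambda>(z,l). l @ [z]" and j = "\<lambda>l. (last l, butlast l)"])
    fix l assume l: "l \<in> permutations_of_set U"
    then have ne: "l \<noteq> []" using assms by (auto simp: permutations_of_set_def)
    then have e: "butlast l @ [last l] = l" by simp
    show "(case (last l, butlast l) of (z, l) \<Rightarrow> l @ [z]) = l" using e by simp
    have "distinct (butlast l @ [last l])" using e l by (simp add: permutations_of_set_def)
    moreover have "set l = insert (last l) (set (butlast l))"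
      by (subst e[symmetric]) simp
    ultimately show "(last l, butlast l) \<in> Sigma U (\<lambda>z. permutations_of_set (U - {z}))"
      using l by (auto simp: permutations_of_set_def)
  next
    fix t assume t: "t \<in> Sigma U (\<lambda>z. permutations_of_set (U - {z}))"
    obtain z l where t': "t = (z,l)" by (cases t) auto
    with t have "z \<in> U" "set l = U - {z}" "distinct l" by (auto simp: permutations_of_set_def)
    then show "(case (case t of (z, l) \<Rightarrow> l @ [z]) of l \<Rightarrow> (last l, butlast l)) = t"
      and "(case t of (z, l) \<Rightarrow> l @ [z]) \<in> permutations_of_set U"
      using t' by (auto simp: permutations_of_set_def)
  next
    fix a assume "a \<in> permutations_of_set U"
    then have "a \<noteq> []" using assms by (auto simp: permutations_of_set_def)
    then show "(case (last a, butlast a) of (z, l) \<Rightarrow> f (l @ [z])) = f a" by simp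
  qed
  also have "\<dots> = (\<Sum>z\<in>U. \<Sum>l\<in>permutations_of_set (U - {z}). f (l @ [z]))"
    by (rule sum.Sigma[symmetric]) (use assms in auto)
  finally show ?thesis .
qed


lemma sum_perms_split:
  assumes "finite X" "x \<in> X"
  shows "(\<Sum>l\<in>permutations_of_set X. f l) =
     (\<Sum>S\<in>{S. x \<in> S \<and> S \<subseteq> X}. \<Sum>l1\<in>permutations_of_set (X - S). \<Sum>l2\<in>permutations_of_set (S - {x}). f (l1 @ x # l2))"
proof -
  have finS: "finite {S. x \<in> S \<and> S \<subseteq> X}" by (rule finite_subset[of _ "Pow X"]) (use assms in auto)
  let ?tw = "\<lambda>l. takeWhile (\<lambda>z. z \<noteq> x) l" and ?dw = "\<lambda>l. tl (dropWhile (\<lambda>z. z \<noteq> x) l)"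
  have "(\<Sum>l\<in>permutations_of_set X. f l) =
     (\<Sum>(S,l1,l2)\<in>Sigma {S. x \<in> S \<and> S \<subseteq> X} (\<lambda>S. permutations_of_set (X - S) \<times> permutations_of_set (S - {x})). f (l1 @ x # l2))"
  proof (rule sum.reindex_bij_witness[where i = "\<lambda>(S,l1,l2). l1 @ x # l2" and j = "\<lambda>l. (insert x (set (?dw l)), ?tw l, ?dw l)"])
    fix l assume l: "l \<in> permutations_of_set X"
    then have xl: "x \<in> set l" and d: "distinct l" and sl: "set l = X" using assms by (auto simp: permutations_of_set_def)
    have dw: "dropWhile (\<lambda>z. z \<noteq> x) l = x # ?dw l"
      using xl by (metis (mono_tags, lifting) dropWhile_eq_Nil_conv hd_dropWhile list.collapse)
    have e: "?tw l @ x # ?dw l = l" using dw takeWhile_dropWhile_id[of "\<lambda>z. z \<noteq> x" l] by simp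
    show "(case (insert x (set (?dw l)), ?tw l, ?dw l) of (S, l1, l2) \<Rightarrow> l1 @ x # l2) = l" using e by simp
    have de: "distinct (?tw l @ x # ?dw l)" using e d by simp
    show "(insert x (set (?dw l)), ?tw l, ?dw l) \<in> Sigma {S. x \<in> S \<and> S \<subseteq> X} (\<lambda>S. permutations_of_set (X - S) \<times> permutations_of_set (S - {x}))"
    proof -
      have 1: "insert x (set (?dw l)) \<subseteq> X" using sl e by (metis Un_upper2 set_append list.set(2))
      have u: "set l = set (?tw l) \<union> insert x (set (?dw l))"
        by (subst e[symmetric]) simp
      have "set (?tw l) \<inter> insert x (set (?dw l)) = {}" using de by auto
      then have "set (?tw l) = X - insert x (set (?dw l))" using u sl by blast
      moreover have "set (?dw l) = insert x (set (?dw l)) - {x}" using de by auto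
      ultimately show ?thesis using 1 de by (auto simp: permutations_of_set_def)
    qed
  next
    fix t assume t: "t \<in> Sigma {S. x \<in> S \<and> S \<subseteq> X} (\<lambda>S. permutations_of_set (X - S) \<times> permutations_of_set (S - {x}))"
    obtain S l1 l2 where t': "t = (S,l1,l2)" by (cases t) auto
    with t have S: "x \<in> S" "S \<subseteq> X" and l1: "set l1 = X - S" "distinct l1" and l2: "set l2 = S - {x}" "distinct l2"
      by (auto simp: permutations_of_set_def)
    have x1: "x \<notin> set l1" using l1 S by auto
    have x2: "x \<notin> set l2" using l2 by auto
    have tw: "?tw (l1 @ x # l2) = l1" by (subst takeWhile_append2) (use x1 in auto)
    have dw: "?dw (l1 @ x # l2) = l2" by (subst dropWhile_append2) (use x1 in auto)
    show "(case (case t of (S, l1, l2) \<Rightarrow> l1 @ x # l2) of l \<Rightarrow> (insert x (set (?dw l)), ?tw l, ?dw l)) = t"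
      using t' tw dw l2 S by auto
    show "(case t of (S, l1, l2) \<Rightarrow> l1 @ x # l2) \<in> permutations_of_set X"
      using t' l1 l2 S x1 x2 by (auto simp: permutations_of_set_def)
  next
    fix l assume l: "l \<in> permutations_of_set X"
    then have xl: "x \<in> set l" using assms by (auto simp: permutations_of_set_def)
    have dw: "dropWhile (\<lambda>z. z \<noteq> x) l = x # ?dw l"
      using xl by (metis (mono_tags, lifting) dropWhile_eq_Nil_conv hd_dropWhile list.collapse)
    have e: "?tw l @ x # ?dw l = l" using dw takeWhile_dropWhile_id[of "\<lambda>z. z \<noteq> x" l] by simp
    show "(case (insert x (set (?dw l)), ?tw l, ?dw l) of (S, l1, l2) \<Rightarrow> f (l1 @ x # l2)) = f l"
      using e by simp
  qed
  also have "\<dots> = (\<Sum>S\<in>{S. x \<in> S \<and> S \<subseteq> X}. \<Sum>(l1,l2)\<in>permutations_of_set (X - S) \<times> permutations_of_set (S - {x}). f (l1 @ x # l2))"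
    by (rule sum.Sigma[symmetric]) (use finS in auto)
  also have "\<dots> = (\<Sum>S\<in>{S. x \<in> S \<and> S \<subseteq> X}. \<Sum>l1\<in>permutations_of_set (X - S). \<Sum>l2\<in>permutations_of_set (S - {x}). f (l1 @ x # l2))"
    by (simp add: sum.cartesian_product)
  finally show ?thesis .
qed




fun wtl :: "('a \<Rightarrow> 'a set \<Rightarrow> real) \<Rightarrow> 'a list \<Rightarrow> 'a set \<Rightarrow> real" where
  "wtl w [] T = 1"
| "wtl w (z # l) T = w z (insert z (set l \<union> T)) * wtl w l T"

lemma wtl_append: "wtl w (l1 @ l2) T = wtl w l1 (set l2 \<union> T) * wtl w l2 T"
  by (induction l1) (auto simp: Un_assoc)

lemma wtl_nonneg: "(\<And>z S. 0 \<le> w z S) \<Longrightarrow> 0 \<le> wtl w l T"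
  by (induction l) auto

locale falm =
  fixes X :: "'a set" and P :: "'a \<Rightarrow> 'a set \<Rightarrow> real"
  assumes fin: "finite X"
    and sum1: "\<And>A. A \<subseteq> X \<Longrightarrow> A \<noteq> {} \<Longrightarrow> (\<Sum>x\<in>A. P x A) = 1"
    and cm: "\<And>x A. A \<subseteq> X \<Longrightarrow> x \<in> A \<Longrightarrow>
        0 \<le> (\<Sum>T\<in>{T. A \<subseteq> T \<and> T \<subseteq> X}. (-1) ^ card (T - A) * P x T)"
begin

definition Q where "Q x A = (\<Sum>T\<in>{T. A \<subseteq> T \<and> T \<subseteq> X}. (-1) ^ card (T - A) * P x T)"
definition out where "out S = (\<Sum>y\<in>S. Q y S)"
definition w where "w z S = (if z \<in> S \<and> S \<subseteq> X then Q z S / out S else 0)"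

lemma Q_nonneg: "A \<subseteq> X \<Longrightarrow> x \<in> A \<Longrightarrow> 0 \<le> Q x A"
  unfolding Q_def by (rule cm)

lemma finI: "finite {T. A \<subseteq> T \<and> T \<subseteq> X}"
  by (rule finite_subset[of _ "Pow X"]) (use fin in auto)

lemma P_eq: "A \<subseteq> X \<Longrightarrow> P x A = (\<Sum>S\<in>{S. A \<subseteq> S \<and> S \<subseteq> X}. Q x S)"
  by (rule mobius1[OF fin]) (auto simp: Q_def)

lemma out_nonneg: "S \<subseteq> X \<Longrightarrow> 0 \<le> out S"
  unfolding out_def by (rule sum_nonneg) (rule Q_nonneg)

lemma Q_le_out: "S \<subseteq> X \<Longrightarrow> z \<in> S \<Longrightarrow> Q z S \<le> out S"
  unfolding out_def
  by (rule member_le_sum) (use Q_nonneg finite_subset fin in auto)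

lemma w_nonneg: "0 \<le> w z S"
  unfolding w_def using Q_nonneg out_nonneg by auto

lemma out_Q: "S \<subseteq> X \<Longrightarrow> z \<in> S \<Longrightarrow> out S * w z S = Q z S"
proof -
  assume a: "S \<subseteq> X" "z \<in> S"
  show ?thesis
  proof (cases "out S = 0")
    case True
    then have "Q z S = 0" using Q_le_out[OF a] Q_nonneg[OF a] by linarith
    then show ?thesis using True by simp
  next
    case False then show ?thesis using a by (simp add: w_def)
  qed
qed

lemma out_X: "X \<noteq> {} \<Longrightarrow> out X = 1"
proof -
  assume ne: "X \<noteq> {}"
  have "{T. X \<subseteq> T \<and> T \<subseteq> X} = {X}" by auto
  then have "Q y X = P y X" for y by (simp add: Q_def)
  then show ?thesis unfolding out_def using sum1[of X] ne by simp
qed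

lemma conservation:
  assumes S: "S \<noteq> {}" "S \<subseteq> X" "S \<noteq> X"
  shows "(\<Sum>z\<in>X - S. Q z (insert z S)) = out S"
proof -
  let ?I = "{T. S \<subseteq> T \<and> T \<subseteq> X}"
  have fX: "finite (X - S)" using fin by simp
  have "out S = (\<Sum>y\<in>S. \<Sum>T\<in>?I. (-1) ^ card (T - S) * P y T)"
    unfolding out_def Q_def ..
  also have "\<dots> = (\<Sum>T\<in>?I. \<Sum>y\<in>S. (-1) ^ card (T - S) * P y T)"
    by (rule sum.swap)
  finally have o: "out S = (\<Sum>T\<in>?I. (-1) ^ card (T - S) * (\<Sum>y\<in>S. P y T))"
    by (simp add: sum_distrib_left)
  have "(\<Sum>z\<in>X - S. Q z (insert z S)) = (\<Sum>z\<in>X - S. \<Sum>T\<in>{T. T \<in> ?I \<and> z \<in> T}. - ((-1) ^ card (T - S) * P z T))"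
  proof (rule sum.cong[OF refl])
    fix z assume z: "z \<in> X - S"
    have e: "{T. T \<in> ?I \<and> z \<in> T} = {T. insert z S \<subseteq> T \<and> T \<subseteq> X}" by auto
    show "Q z (insert z S) = (\<Sum>T\<in>{T. T \<in> ?I \<and> z \<in> T}. - ((-1) ^ card (T - S) * P z T))"
      unfolding Q_def e
    proof (rule sum.cong[OF refl])
      fix T assume T: "T \<in> {T. insert z S \<subseteq> T \<and> T \<subseteq> X}"
      have eq: "T - S = insert z (T - insert z S)" using T z by auto
      have "finite (T - insert z S)" using T fin finite_subset by blast
      then have "card (insert z (T - insert z S)) = Suc (card (T - insert z S))"
        by (rule card_insert_disjoint) simp
      then have "card (T - S) = Suc (card (T - insert z S))" by (simp only: eq)
      then show "(-1) ^ card (T - insert z S) * P z T = - ((-1) ^ card (T - S) * P z T)" by simp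
    qed
  qed
  also have "\<dots> = (\<Sum>T\<in>?I. \<Sum>z\<in>{z. z \<in> X - S \<and> z \<in> T}. - ((-1) ^ card (T - S) * P z T))"
    by (rule sum.swap_restrict[OF fX finI])
  also have "\<dots> = (\<Sum>T\<in>?I. - ((-1) ^ card (T - S) * (\<Sum>z\<in>T - S. P z T)))"
  proof (rule sum.cong[OF refl])
    fix T assume "T \<in> ?I"
    then have "{z. z \<in> X - S \<and> z \<in> T} = T - S" by auto
    then show "(\<Sum>z\<in>{z. z \<in> X - S \<and> z \<in> T}. - ((-1) ^ card (T - S) * P z T)) = - ((-1) ^ card (T - S) * (\<Sum>z\<in>T - S. P z T))"
      by (simp add: sum_distrib_left sum_negf)
  qed
  finally have i: "(\<Sum>z\<in>X - S. Q z (insert z S)) = (\<Sum>T\<in>?I. - ((-1) ^ card (T - S) * (\<Sum>z\<in>T - S. P z T)))" .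
  have "out S - (\<Sum>z\<in>X - S. Q z (insert z S)) = (\<Sum>T\<in>?I. (-1) ^ card (T - S) * ((\<Sum>y\<in>S. P y T) + (\<Sum>z\<in>T - S. P z T)))"
    unfolding o i by (simp add: sum_subtractf[symmetric] algebra_simps)
  also have "\<dots> = (\<Sum>T\<in>?I. (-1) ^ card (T - S))"
  proof (rule sum.cong[OF refl])
    fix T assume T: "T \<in> ?I"
    then have fT: "finite T" using fin finite_subset by blast
    have "(\<Sum>y\<in>S. P y T) + (\<Sum>z\<in>T - S. P z T) = (\<Sum>y\<in>T. P y T)"
      using sum.subset_diff[of S T "\<lambda>y. P y T"] T fT by simp
    also have "\<dots> = 1" using sum1[of T] T S by auto
    finally show "(-1) ^ card (T - S) * ((\<Sum>y\<in>S. P y T) + (\<Sum>z\<in>T - S. P z T)) = (-1) ^ card (T - S)" by simp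
  qed
  also have "\<dots> = 0" using alt_bot[OF fin S(2)] S(3) by simp
  finally show ?thesis by simp
qed

lemma Q_le_out_in:
  assumes "S \<noteq> {}" "S \<subseteq> X" "z \<in> X" "z \<notin> S"
  shows "Q z (insert z S) \<le> out S"
proof -
  have "S \<noteq> X" using assms by auto
  then have "out S = (\<Sum>z\<in>X - S. Q z (insert z S))" using conservation assms by simp
  moreover have "Q z (insert z S) \<le> (\<Sum>z\<in>X - S. Q z (insert z S))"
    by (rule member_le_sum) (use assms fin Q_nonneg in auto)
  ultimately show ?thesis by simp
qed

lemma down:
  "S \<subseteq> X \<Longrightarrow> (S = {} \<or> out S > 0) \<Longrightarrow> (\<Sum>l\<in>permutations_of_set S. wtl w l {}) = 1"
proof (induction "card S" arbitrary: S rule: less_induct)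
  case less
  show ?case
  proof (cases "S = {}")
    case True then show ?thesis by simp
  next
    case ne: False
    then have pos: "out S > 0" using less.prems by auto
    have fS: "finite S" using less.prems fin finite_subset by blast
    have "(\<Sum>l\<in>permutations_of_set S. wtl w l {}) = (\<Sum>z\<in>S. \<Sum>l\<in>permutations_of_set (S - {z}). wtl w (z # l) {})"
      by (rule sum_perms_cons[OF fS ne])
    also have "\<dots> = (\<Sum>z\<in>S. w z S)"
    proof (rule sum.cong[OF refl])
      fix z assume z: "z \<in> S"
      have "(\<Sum>l\<in>permutations_of_set (S - {z}). wtl w (z # l) {}) = (\<Sum>l\<in>permutations_of_set (S - {z}). w z S * wtl w l {})"
      proof (rule sum.cong[OF refl])
        fix l assume "l \<in> permutations_of_set (S - {z})"
        then have "insert z (set l \<union> {}) = S" using z by (auto simp: permutations_of_set_def)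
        then show "wtl w (z # l) {} = w z S * wtl w l {}" by simp
      qed
      also have "\<dots> = w z S * (\<Sum>l\<in>permutations_of_set (S - {z}). wtl w l {})" by (simp add: sum_distrib_left)
      also have "\<dots> = w z S"
      proof (cases "Q z S = 0")
        case True then show ?thesis by (simp add: w_def)
      next
        case False
        then have qp: "Q z S > 0" using Q_nonneg[of S z] less.prems z by linarith
        have "S - {z} = {} \<or> out (S - {z}) > 0"
        proof (cases "S - {z} = {}")
          case False
          have "Q z (insert z (S - {z})) \<le> out (S - {z})"
            by (rule Q_le_out_in) (use False less.prems z in auto)
          then show ?thesis using qp z by (simp add: insert_absorb)
        qed simp
        moreover have "card (S - {z}) < card S" by (rule card_Diff1_less[OF fS z])
        ultimately have "(\<Sum>l\<in>permutations_of_set (S - {z}). wtl w l {}) = 1"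
          using less.hyps less.prems by auto
        then show ?thesis by simp
      qed
      finally show "(\<Sum>l\<in>permutations_of_set (S - {z}). wtl w (z # l) {}) = w z S" .
    qed
    also have "\<dots> = (\<Sum>z\<in>S. Q z S) / out S"
      using less.prems by (simp add: w_def sum_divide_distrib)
    also have "\<dots> = 1" using pos by (simp add: out_def)
    finally show ?thesis .
  qed
qed

lemma up:
  "S \<subseteq> X \<Longrightarrow> S \<noteq> {} \<Longrightarrow> (\<Sum>l\<in>permutations_of_set (X - S). wtl w l S) = out S"
proof (induction "card (X - S)" arbitrary: S rule: less_induct)
  case less
  show ?case
  proof (cases "X - S = {}")
    case True
    then have "S = X" using less.prems by auto
    then show ?thesis using True less.prems out_X by simp
  next
    case ne: False
    have fS: "finite (X - S)" using fin by simp
    have "(\<Sum>l\<in>permutations_of_set (X - S). wtl w l S) = (\<Sum>z\<in>X - S. \<Sum>l\<in>permutations_of_set (X - S - {z}). wtl w (l @ [z]) S)"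
      by (rule sum_perms_snoc[OF fS ne])
    also have "\<dots> = (\<Sum>z\<in>X - S. Q z (insert z S))"
    proof (rule sum.cong[OF refl])
      fix z assume z: "z \<in> X - S"
      have "(\<Sum>l\<in>permutations_of_set (X - S - {z}). wtl w (l @ [z]) S)
          = (\<Sum>l\<in>permutations_of_set (X - insert z S). wtl w l (insert z S)) * w z (insert z S)"
      proof -
        have "X - S - {z} = X - insert z S" by auto
        moreover have "wtl w (l @ [z]) S = wtl w l (insert z S) * w z (insert z S)" for l
          by (simp add: wtl_append)
        ultimately show ?thesis by (simp add: sum_distrib_right)
      qed
      also have "(\<Sum>l\<in>permutations_of_set (X - insert z S). wtl w l (insert z S)) = out (insert z S)"
      proof (rule less.hyps)
        have "card (X - S - {z}) < card (X - S)" by (rule card_Diff1_less[OF fS z])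
        moreover have "X - S - {z} = X - insert z S" by auto
        ultimately show "card (X - insert z S) < card (X - S)" by simp
      qed (use less.prems z in auto)
      also have "out (insert z S) * w z (insert z S) = Q z (insert z S)"
        by (rule out_Q) (use less.prems z in auto)
      finally show "(\<Sum>l\<in>permutations_of_set (X - S - {z}). wtl w (l @ [z]) S) = Q z (insert z S)" .
    qed
    also have "\<dots> = out S" by (rule conservation) (use less.prems ne in auto)
    finally show ?thesis .
  qed
qed

lemma main:
  assumes "A \<subseteq> X" "x \<in> A"
  shows "(\<Sum>l\<in>permutations_of_set X. if rel_of l \<in> N_set X x A then wtl w l {} else 0) = P x A"
proof -
  have xX: "x \<in> X" using assms by auto
  let ?F = "\<lambda>l. if rel_of l \<in> N_set X x A then wtl w l {} else 0"
  let ?U = "\<lambda>S. \<Sum>l\<in>permutations_of_set (X - S). wtl w l S"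
  let ?D = "\<lambda>S. \<Sum>l\<in>permutations_of_set S. wtl w l {}"
  have finx: "finite {S. x \<in> S \<and> S \<subseteq> X}" by (rule finite_subset[of _ "Pow X"]) (use fin in auto)
  have "(\<Sum>l\<in>permutations_of_set X. ?F l) =
     (\<Sum>S\<in>{S. x \<in> S \<and> S \<subseteq> X}. \<Sum>l1\<in>permutations_of_set (X - S). \<Sum>l2\<in>permutations_of_set (S - {x}). ?F (l1 @ x # l2))"
    by (rule sum_perms_split[OF fin xX])
  also have "\<dots> = (\<Sum>S\<in>{S. x \<in> S \<and> S \<subseteq> X}. if A \<subseteq> S then ?U S * w x S * ?D (S - {x}) else 0)"
  proof (rule sum.cong[OF refl])
    fix S assume S: "S \<in> {S. x \<in> S \<and> S \<subseteq> X}"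
    have "(\<Sum>l1\<in>permutations_of_set (X - S). \<Sum>l2\<in>permutations_of_set (S - {x}). ?F (l1 @ x # l2))
       = (\<Sum>l1\<in>permutations_of_set (X - S). \<Sum>l2\<in>permutations_of_set (S - {x}).
            if A \<subseteq> S then wtl w l1 S * w x S * wtl w l2 {} else 0)"
    proof (intro sum.cong[OF refl])
      fix l1 l2 assume l1: "l1 \<in> permutations_of_set (X - S)" and l2: "l2 \<in> permutations_of_set (S - {x})"
      have sl1: "set l1 = X - S" "distinct l1" using l1 by (auto simp: permutations_of_set_def)
      have sl2: "set l2 = S - {x}" "distinct l2" using l2 by (auto simp: permutations_of_set_def)
      have d: "distinct (l1 @ x # l2)" using sl1 sl2 S by auto
      have sl: "set (l1 @ x # l2) = X" using sl1 sl2 S by auto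
      have lin: "rel_of (l1 @ x # l2) \<in> lin_orders X" using rel_of_lin[OF d] sl by simp
      have "rel_of (l1 @ x # l2) \<in> N_set X x A \<longleftrightarrow> (\<forall>y\<in>A - {x}. y \<in> set l2)"
        unfolding N_set_def using lin rel_of_split[OF d] by auto
      also have "\<dots> \<longleftrightarrow> A \<subseteq> S" using sl2 S assms by auto
      finally have c: "rel_of (l1 @ x # l2) \<in> N_set X x A \<longleftrightarrow> A \<subseteq> S" .
      have "insert x (set l2 \<union> {}) = S" using sl2 S by auto
      then have "wtl w (l1 @ x # l2) {} = wtl w l1 S * (w x S * wtl w l2 {})"
        by (simp add: wtl_append)
      then show "?F (l1 @ x # l2) = (if A \<subseteq> S then wtl w l1 S * w x S * wtl w l2 {} else 0)"
        using c by simp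
    qed
    also have "\<dots> = (if A \<subseteq> S then ?U S * w x S * ?D (S - {x}) else 0)"
      apply (cases "A \<subseteq> S")
       apply (simp_all add: sum_distrib_right sum_distrib_left)
      apply (rule sum.swap)
      done
    finally show "(\<Sum>l1\<in>permutations_of_set (X - S). \<Sum>l2\<in>permutations_of_set (S - {x}). ?F (l1 @ x # l2))
       = (if A \<subseteq> S then ?U S * w x S * ?D (S - {x}) else 0)" .
  qed
  also have "\<dots> = (\<Sum>S\<in>{S. S \<in> {S. x \<in> S \<and> S \<subseteq> X} \<and> A \<subseteq> S}. ?U S * w x S * ?D (S - {x}))"
    by (rule sum.inter_filter[OF finx, symmetric])
  also have "{S. S \<in> {S. x \<in> S \<and> S \<subseteq> X} \<and> A \<subseteq> S} = {S. A \<subseteq> S \<and> S \<subseteq> X}" using assms by auto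
  also have "(\<Sum>S\<in>{S. A \<subseteq> S \<and> S \<subseteq> X}. ?U S * w x S * ?D (S - {x})) = (\<Sum>S\<in>{S. A \<subseteq> S \<and> S \<subseteq> X}. Q x S)"
  proof (rule sum.cong[OF refl])
    fix S assume S: "S \<in> {S. A \<subseteq> S \<and> S \<subseteq> X}"
    then have xS: "x \<in> S" "S \<subseteq> X" using assms by auto
    show "?U S * w x S * ?D (S - {x}) = Q x S"
    proof (cases "Q x S = 0")
      case True then show ?thesis by (simp add: w_def)
    next
      case False
      then have qp: "Q x S > 0" using Q_nonneg[of S x] xS by linarith
      have "S - {x} = {} \<or> out (S - {x}) > 0"
      proof (cases "S - {x} = {}")
        case False
        have "Q x (insert x (S - {x})) \<le> out (S - {x})"
          by (rule Q_le_out_in) (use False xS in auto)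
        then show ?thesis using qp xS by (simp add: insert_absorb)
      qed simp
      then have D: "?D (S - {x}) = 1" by (intro down) (use xS in auto)
      have U: "?U S = out S" by (rule up) (use xS in auto)
      show ?thesis using D U out_Q[OF xS(2) xS(1)] by simp
    qed
  qed
  also have "\<dots> = P x A" using P_eq[OF assms(1)] by simp
  finally show ?thesis .
qed

definition nu where "nu r = (\<Sum>l\<in>{l\<in>permutations_of_set X. rel_of l = r}. wtl w l {})"

lemma rel_of_perm: "l \<in> permutations_of_set X \<Longrightarrow> rel_of l \<in> lin_orders X"
  using rel_of_lin by (auto simp: permutations_of_set_def)

lemma sum_nu:
  assumes "R \<subseteq> lin_orders X"
  shows "(\<Sum>r\<in>R. nu r) = (\<Sum>l\<in>permutations_of_set X. if rel_of l \<in> R then wtl w l {} else 0)"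
proof -
  have fL: "finite (lin_orders X)"
    by (rule finite_subset[of _ "Pow (X \<times> X)"]) (use fin in \<open>auto simp: lin_orders_def\<close>)
  have fR: "finite R" using fL assms finite_subset by blast
  have fS: "finite {l\<in>permutations_of_set X. rel_of l \<in> R}" by simp
  have "(\<Sum>r\<in>R. nu r) = (\<Sum>r\<in>R. \<Sum>l\<in>{l. l \<in> {l\<in>permutations_of_set X. rel_of l \<in> R} \<and> rel_of l = r}. wtl w l {})"
    unfolding nu_def by (rule sum.cong[OF refl]) (rule sum.cong, auto)
  also have "\<dots> = (\<Sum>l\<in>{l\<in>permutations_of_set X. rel_of l \<in> R}. wtl w l {})"
    by (rule sum.group[OF fS fR]) auto
  also have "\<dots> = (\<Sum>l\<in>permutations_of_set X. if rel_of l \<in> R then wtl w l {} else 0)"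
    by (rule sum.inter_filter) simp
  finally show ?thesis .
qed

lemma falmagne:
  "\<exists>\<nu>. \<nu> \<in> distr (lin_orders X) \<and> (\<forall>A x. A \<subseteq> X \<longrightarrow> x \<in> A \<longrightarrow> P x A = (\<Sum>r\<in>N_set X x A. \<nu> r))"
proof (intro exI conjI allI impI)
  show "nu \<in> distr (lin_orders X)"
    unfolding distr_def
  proof (intro CollectI conjI ballI)
    fix r show "0 \<le> nu r" unfolding nu_def by (intro sum_nonneg wtl_nonneg w_nonneg)
  next
    have "(\<Sum>r\<in>lin_orders X. nu r) = (\<Sum>l\<in>permutations_of_set X. wtl w l {})"
      unfolding sum_nu[OF order.refl] by (rule sum.cong) (auto simp: rel_of_perm)
    also have "\<dots> = 1"
    proof (rule down)
      show "X = {} \<or> 0 < out X"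
      proof (cases "X = {}")
        case False then show ?thesis using out_X by simp
      qed simp
    qed simp
    finally show "(\<Sum>r\<in>lin_orders X. nu r) = 1" .
  qed
next
  fix A x assume "A \<subseteq> X" "x \<in> A"
  moreover have "N_set X x A \<subseteq> lin_orders X" by (auto simp: N_set_def)
  ultimately show "P x A = (\<Sum>r\<in>N_set X x A. nu r)"
    using sum_nu main by simp
qed

end




lemma ns_iff[simp]: "A \<in> nonempty_subsets X \<longleftrightarrow> A \<subseteq> X \<and> A \<noteq> {}"
  by (simp add: nonempty_subsets_def)

lemma finite_lin: "finite X \<Longrightarrow> finite (lin_orders X)"
  by (rule finite_subset[of _ "Pow (X \<times> X)"]) (auto simp: lin_orders_def)

lemma finite_N: "finite X \<Longrightarrow> finite (N_set X x A)"
  by (rule finite_subset[OF _ finite_lin]) (auto simp: N_set_def)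

lemma top_exists:
  assumes "finite B" "B \<noteq> {}" "B \<subseteq> X" "r \<in> lin_orders X"
  shows "\<exists>y\<in>B. \<forall>z\<in>B - {y}. (y, z) \<in> r"
  using assms(1,2,3)
proof (induction B rule: finite_ne_induct)
  case (singleton b) then show ?case by simp
next
  case (insert b B)
  from insert obtain y where y: "y \<in> B" "\<forall>z\<in>B - {y}. (y, z) \<in> r" by auto
  have lin: "trans r" "irrefl r" "total_on X r" using assms(4) by (auto simp: lin_orders_def strict_linear_order_on_def)
  show ?case
  proof (cases "(y, b) \<in> r")
    case True then show ?thesis using y by auto
  next
    case False
    have "b \<noteq> y" using insert y by auto
    then have bb: "(b, y) \<in> r" using False lin(3) insert y unfolding total_on_def by blast
    have "\<forall>z\<in>insert b B - {b}. (b, z) \<in> r"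
      using bb y lin(1) unfolding trans_def by blast
    then show ?thesis by blast
  qed
qed

lemma top_unique:
  assumes "r \<in> N_set X y B" "r \<in> N_set X y' B" "y \<in> B" "y' \<in> B"
  shows "y = y'"
proof (rule ccontr)
  assume ne: "y \<noteq> y'"
  have "(y, y') \<in> r" "(y', y) \<in> r" using assms ne by (auto simp: N_set_def)
  moreover have "trans r" "irrefl r" using assms by (auto simp: N_set_def lin_orders_def strict_linear_order_on_def)
  ultimately show False unfolding trans_def irrefl_def by blast
qed

lemma sum_N_partition:
  assumes "finite X" "B \<subseteq> X" "B \<noteq> {}"
  shows "(\<Sum>y\<in>B. \<Sum>r\<in>N_set X y B. f r) = (\<Sum>r\<in>lin_orders X. f r)"
proof -
  have fB: "finite B" using assms finite_subset by blast
  have U: "(\<Union>y\<in>B. N_set X y B) = lin_orders X"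
  proof
    show "(\<Union>y\<in>B. N_set X y B) \<subseteq> lin_orders X" by (auto simp: N_set_def)
    show "lin_orders X \<subseteq> (\<Union>y\<in>B. N_set X y B)"
    proof
      fix r assume "r \<in> lin_orders X"
      then show "r \<in> (\<Union>y\<in>B. N_set X y B)"
        using top_exists[OF fB assms(3,2)] by (auto simp: N_set_def)
    qed
  qed
  have "(\<Sum>r\<in>lin_orders X. f r) = (\<Sum>r\<in>(\<Union>y\<in>B. N_set X y B). f r)" using U by simp
  also have "\<dots> = (\<Sum>y\<in>B. \<Sum>r\<in>N_set X y B. f r)"
  proof (rule sum.UNION_disjoint[OF fB])
    show "\<forall>y\<in>B. finite (N_set X y B)" using finite_N[OF assms(1)] by auto
    show "\<forall>y\<in>B. \<forall>y'\<in>B. y \<noteq> y' \<longrightarrow> N_set X y B \<inter> N_set X y' B = {}"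
      using top_unique[of _ X _ B] by blast
  qed
  finally show ?thesis by simp
qed

lemma bm_nonneg:
  fixes \<mu> :: "'a rel \<Rightarrow> real"
  assumes fin: "finite X" and mu: "\<And>r. r \<in> lin_orders X \<Longrightarrow> 0 \<le> \<mu> r" and A: "A \<subseteq> X" "x \<in> A"
  shows "0 \<le> (\<Sum>T\<in>{T. A \<subseteq> T \<and> T \<subseteq> X}. (-1) ^ card (T - A) * (\<Sum>r\<in>N_set X x T. \<mu> r))"
proof -
  define ds where "ds r = insert x {z\<in>X. (x, z) \<in> r}" for r :: "'a rel"
  define g where "g S = (\<Sum>r\<in>{r\<in>lin_orders X. ds r = S}. \<mu> r)" for S
  have xX: "x \<in> X" using A by auto
  have "(\<Sum>T\<in>{T. A \<subseteq> T \<and> T \<subseteq> X}. (-1) ^ card (T - A) * (\<Sum>r\<in>N_set X x T. \<mu> r)) = g A"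
  proof (rule mobius2[OF fin A(1)])
    fix T assume T: "A \<subseteq> T" "T \<subseteq> X"
    have fI: "finite {S. T \<subseteq> S \<and> S \<subseteq> X}" by (rule finite_subset[of _ "Pow X"]) (use fin in auto)
    have "(\<Sum>S\<in>{S. T \<subseteq> S \<and> S \<subseteq> X}. g S) = (\<Sum>S\<in>{S. T \<subseteq> S \<and> S \<subseteq> X}. \<Sum>r\<in>{r. r \<in> N_set X x T \<and> ds r = S}. \<mu> r)"
    proof (rule sum.cong[OF refl])
      fix S assume S: "S \<in> {S. T \<subseteq> S \<and> S \<subseteq> X}"
      have "{r\<in>lin_orders X. ds r = S} = {r. r \<in> N_set X x T \<and> ds r = S}"
        using S T A by (auto simp: N_set_def ds_def)
      then show "g S = (\<Sum>r\<in>{r. r \<in> N_set X x T \<and> ds r = S}. \<mu> r)" by (simp add: g_def)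
    qed
    also have "\<dots> = (\<Sum>r\<in>N_set X x T. \<mu> r)"
    proof (rule sum.group[OF finite_N[OF fin] fI])
      show "ds ` N_set X x T \<subseteq> {S. T \<subseteq> S \<and> S \<subseteq> X}"
        using T xX by (auto simp: N_set_def ds_def)
    qed
    finally show "(\<Sum>r\<in>N_set X x T. \<mu> r) = (\<Sum>S\<in>{S. T \<subseteq> S \<and> S \<subseteq> X}. g S)" by simp
  qed
  moreover have "0 \<le> g A" unfolding g_def by (rule sum_nonneg) (use mu in auto)
  ultimately show ?thesis by simp
qed




lemma only_if:
  fixes X :: "'a set" and p :: "'a \<Rightarrow> 'a \<Rightarrow> 'a set \<Rightarrow> 'a set \<Rightarrow> real"
  assumes fin: "finite X"
    and "random_joint_choice_rule X p"
    and si: "state_indep_cdru X p"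
  shows "complete_monotonicity X p \<and> marginality X p \<and> choice_set_independence X p"
proof -
  obtain \<nu> t where nu: "\<nu> \<in> distr (lin_orders X)" and t: "\<forall>x\<in>X. t x \<in> distr (lin_orders X)"
    and rep0: "\<forall>A \<in> nonempty_subsets X. \<forall>B \<in> nonempty_subsets X. \<forall>x\<in>A. \<forall>y\<in>B.
           p x y A B = (\<Sum>r \<in> N_set X x A. \<Sum>r' \<in> N_set X y B. \<nu> r * t x r')"
    using si unfolding state_indep_cdru_def by blast
  define V where "V x A = (\<Sum>r\<in>N_set X x A. \<nu> r)" for x A
  define W where "W x y B = (\<Sum>r\<in>N_set X y B. t x r)" for x y B
  have rep: "p x y A B = V x A * W x y B"
    if "A \<subseteq> X" "A \<noteq> {}" "B \<subseteq> X" "B \<noteq> {}" "x \<in> A" "y \<in> B" for x y A B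
    using rep0 that by (simp add: V_def W_def sum_product)
  have nu_nn: "\<And>r. r \<in> lin_orders X \<Longrightarrow> 0 \<le> \<nu> r" using nu by (auto simp: distr_def)
  have t_nn: "\<And>x r. x \<in> X \<Longrightarrow> r \<in> lin_orders X \<Longrightarrow> 0 \<le> t x r" using t by (auto simp: distr_def)
  have W1: "(\<Sum>y\<in>B. W x y B) = 1" if "x \<in> X" "B \<subseteq> X" "B \<noteq> {}" for x B
    using sum_N_partition[OF fin that(2,3), of "t x"] t that(1) by (simp add: W_def distr_def)
  have margV: "(\<Sum>y\<in>B. p x y A B) = V x A"
    if "A \<subseteq> X" "A \<noteq> {}" "B \<subseteq> X" "B \<noteq> {}" "x \<in> A" for x A B
  proof -
    have "(\<Sum>y\<in>B. p x y A B) = (\<Sum>y\<in>B. V x A * W x y B)"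
      by (rule sum.cong[OF refl]) (rule rep, use that in auto)
    also have "\<dots> = V x A" using W1[of x B] that by (auto simp: sum_distrib_left[symmetric])
    finally show ?thesis .
  qed
  have M: "marginality X p"
    unfolding marginality_def using margV by auto
  have C: "choice_set_independence X p"
    unfolding choice_set_independence_def
  proof (intro ballI impI)
    fix B y x A A'
    assume B: "B \<in> nonempty_subsets X" and y: "y \<in> B" and x: "x \<in> X"
      and A: "A \<in> nonempty_subsets X" and A': "A' \<in> nonempty_subsets X"
      and xA: "x \<in> A" and xA': "x \<in> A'" and p1: "marg_p X p x A > 0" and p2: "marg_p X p x A' > 0"
    have Xne: "X \<noteq> {}" using x by auto
    have m1: "marg_p X p x A = V x A" unfolding marg_p_def using margV[of A X x] A xA Xne by auto
    have m2: "marg_p X p x A' = V x A'" unfolding marg_p_def using margV[of A' X x] A' xA' Xne by auto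
    have "p x y A B / marg_p X p x A = W x y B"
      using rep[of A B x y] A B xA y m1 p1 by auto
    moreover have "p x y A' B / marg_p X p x A' = W x y B"
      using rep[of A' B x y] A' B xA' y m2 p2 by auto
    ultimately show "p x y A B / marg_p X p x A = p x y A' B / marg_p X p x A'" by simp
  qed
  have CM: "complete_monotonicity X p"
    unfolding complete_monotonicity_def
  proof (intro ballI)
    fix A B x y assume A: "A \<in> nonempty_subsets X" and B: "B \<in> nonempty_subsets X" and x: "x \<in> A" and y: "y \<in> B"
    have xX: "x \<in> X" using A x by auto
    have "mobius_inv X p x y A B =
       (\<Sum>A'\<in>{A'. A \<subseteq> A' \<and> A' \<subseteq> X}. \<Sum>B'\<in>{B'. B \<subseteq> B' \<and> B' \<subseteq> X}.
          ((-1) ^ card (A' - A) * V x A') * ((-1) ^ card (B' - B) * W x y B'))"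
      unfolding mobius_inv_def
    proof (intro sum.cong refl)
      fix A' B' assume A': "A' \<in> {A'. A \<subseteq> A' \<and> A' \<subseteq> X}" and B': "B' \<in> {B'. B \<subseteq> B' \<and> B' \<subseteq> X}"
      have "p x y A' B' = V x A' * W x y B'" by (rule rep) (use A' B' A B x y in auto)
      then show "(-1) ^ (card (A' - A) + card (B' - B)) * p x y A' B' =
          ((-1) ^ card (A' - A) * V x A') * ((-1) ^ card (B' - B) * W x y B')"
        by (simp add: power_add)
    qed
    also have "\<dots> = (\<Sum>A'\<in>{A'. A \<subseteq> A' \<and> A' \<subseteq> X}. (-1) ^ card (A' - A) * V x A') *
                   (\<Sum>B'\<in>{B'. B \<subseteq> B' \<and> B' \<subseteq> X}. (-1) ^ card (B' - B) * W x y B')"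
      by (simp add: sum_product)
    also have "0 \<le> \<dots>"
    proof (rule mult_nonneg_nonneg)
      show "0 \<le> (\<Sum>A'\<in>{A'. A \<subseteq> A' \<and> A' \<subseteq> X}. (-1) ^ card (A' - A) * V x A')"
        unfolding V_def by (rule bm_nonneg[OF fin nu_nn]) (use A x in auto)
      show "0 \<le> (\<Sum>B'\<in>{B'. B \<subseteq> B' \<and> B' \<subseteq> X}. (-1) ^ card (B' - B) * W x y B')"
        unfolding W_def by (rule bm_nonneg[OF fin t_nn[OF xX]]) (use B y in auto)
    qed
    finally show "0 \<le> mobius_inv X p x y A B" .
  qed
  show ?thesis using M C CM by blast
qed




lemma if_dir:
  fixes X :: "'a set" and p :: "'a \<Rightarrow> 'a \<Rightarrow> 'a set \<Rightarrow> 'a set \<Rightarrow> real"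
  assumes fin: "finite X"
    and rule: "random_joint_choice_rule X p"
    and CM: "complete_monotonicity X p" and M: "marginality X p" and CSI: "choice_set_independence X p"
  shows "state_indep_cdru X p"
proof -
  define mp where "mp x A = marg_p X p x A" for x A
  have p_nn: "0 \<le> p x y A B" if "A \<subseteq> X" "A \<noteq> {}" "B \<subseteq> X" "B \<noteq> {}" "x \<in> A" "y \<in> B" for x y A B
    using rule[unfolded random_joint_choice_rule_def, rule_format, of A B] that by auto
  have p_sum: "(\<Sum>x\<in>A. \<Sum>y\<in>B. p x y A B) = 1" if "A \<subseteq> X" "A \<noteq> {}" "B \<subseteq> X" "B \<noteq> {}" for A B
    using rule[unfolded random_joint_choice_rule_def, rule_format, of A B] that by auto
  have marg: "(\<Sum>y\<in>B. p x y A B) = mp x A" if "A \<subseteq> X" "A \<noteq> {}" "B \<subseteq> X" "B \<noteq> {}" "x \<in> A" for x A B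
  proof -
    have "X \<noteq> {}" using that by auto
    show ?thesis unfolding mp_def marg_p_def
      by (rule M[unfolded marginality_def, rule_format]) (use that \<open>X \<noteq> {}\<close> in auto)
  qed
  have mp_nn: "0 \<le> mp x A" if "A \<subseteq> X" "x \<in> A" for x A
  proof -
    have "X \<noteq> {}" using that by auto
    then show ?thesis unfolding mp_def marg_p_def by (intro sum_nonneg p_nn) (use that in auto)
  qed
  have p_le: "p x y A B \<le> mp x A" if "A \<subseteq> X" "B \<subseteq> X" "x \<in> A" "y \<in> B" for x y A B
  proof -
    have fB: "finite B" using fin that finite_subset by blast
    have "p x y A B \<le> (\<Sum>y\<in>B. p x y A B)"
    proof (rule member_le_sum)
      fix z assume "z \<in> B - {y}"
      then show "0 \<le> p x z A B" using that by (intro p_nn) auto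
    qed (use that fB in auto)
    also have "\<dots> = mp x A" by (rule marg) (use that in auto)
    finally show ?thesis .
  qed
  have mob_X: "mobius_inv X p x y A X = (\<Sum>T\<in>{T. A \<subseteq> T \<and> T \<subseteq> X}. (-1) ^ card (T - A) * p x y T X)" for x y A
  proof -
    have "{B'. X \<subseteq> B' \<and> B' \<subseteq> X} = {X}" by auto
    then show ?thesis unfolding mobius_inv_def by simp
  qed
  interpret F: falm X mp
  proof
    show "finite X" by (rule fin)
  next
    fix A assume A: "A \<subseteq> X" "A \<noteq> {}"
    then show "(\<Sum>x\<in>A. mp x A) = 1" using p_sum[of A X] unfolding mp_def marg_p_def by auto
  next
    fix x A assume A: "A \<subseteq> X" "x \<in> A"
    have fI: "finite {T. A \<subseteq> T \<and> T \<subseteq> X}" by (rule finite_subset[of _ "Pow X"]) (use fin in auto)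
    have "(\<Sum>T\<in>{T. A \<subseteq> T \<and> T \<subseteq> X}. (-1) ^ card (T - A) * mp x T) = (\<Sum>y\<in>X. mobius_inv X p x y A X)"
      unfolding mob_X mp_def marg_p_def by (simp add: sum_distrib_left sum.swap[of _ X])
    also have "0 \<le> \<dots>"
      by (rule sum_nonneg, rule CM[unfolded complete_monotonicity_def, rule_format]) (use A in auto)
    finally show "0 \<le> (\<Sum>T\<in>{T. A \<subseteq> T \<and> T \<subseteq> X}. (-1) ^ card (T - A) * mp x T)" .
  qed
  obtain \<nu> where nu: "\<nu> \<in> distr (lin_orders X)" and nuP: "\<And>A x. A \<subseteq> X \<Longrightarrow> x \<in> A \<Longrightarrow> mp x A = (\<Sum>r\<in>N_set X x A. \<nu> r)"
    using F.falmagne by blast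
  have ex_t: "\<exists>\<tau>. \<tau> \<in> distr (lin_orders X) \<and> (\<forall>A B y. A \<subseteq> X \<longrightarrow> B \<subseteq> X \<longrightarrow> B \<noteq> {} \<longrightarrow> x \<in> A \<longrightarrow> y \<in> B \<longrightarrow>
        p x y A B = mp x A * (\<Sum>r\<in>N_set X y B. \<tau> r))" if xX: "x \<in> X" for x
  proof (cases "\<exists>A0. A0 \<subseteq> X \<and> x \<in> A0 \<and> mp x A0 > 0")
    case False
    then have z: "mp x A = 0" if "A \<subseteq> X" "x \<in> A" for A using mp_nn[OF that] that by force
    show ?thesis
    proof (intro exI conjI allI impI)
      show "\<nu> \<in> distr (lin_orders X)" by (rule nu)
      fix A B y assume "A \<subseteq> X" "B \<subseteq> X" "B \<noteq> {}" "x \<in> A" "y \<in> B"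
      then show "p x y A B = mp x A * (\<Sum>r\<in>N_set X y B. \<nu> r)"
        using p_le[of A B x y] p_nn[of A B x y] z[of A] by auto
    qed
  next
    case True
    then obtain A0 where A0: "A0 \<subseteq> X" "x \<in> A0" "mp x A0 > 0" by blast
    define c where "c y B = p x y A0 B / mp x A0" for y B
    have pc: "p x y A B = c y B * mp x A" if "A \<subseteq> X" "B \<subseteq> X" "B \<noteq> {}" "x \<in> A" "y \<in> B" for A B y
    proof (cases "mp x A > 0")
      case True
      have "p x y A B / mp x A = c y B"
        unfolding mp_def c_def
        by (rule CSI[unfolded choice_set_independence_def, rule_format]) (use that A0 True xX in \<open>auto simp: mp_def\<close>)
      then show ?thesis using True by (simp add: field_simps)
    next
      case False
      then have "mp x A = 0" using mp_nn[of A x] that by auto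
      then show ?thesis using p_le[of A B x y] p_nn[of A B x y] that by auto
    qed
    interpret G: falm X c
    proof
      show "finite X" by (rule fin)
    next
      fix B assume B: "B \<subseteq> X" "B \<noteq> {}"
      have "(\<Sum>y\<in>B. c y B) = (\<Sum>y\<in>B. p x y A0 B) / mp x A0" by (simp add: c_def sum_divide_distrib)
      also have "\<dots> = 1"
      proof -
        have "A0 \<noteq> {}" using A0 by auto
        then have "(\<Sum>y\<in>B. p x y A0 B) = mp x A0" using marg[of A0 B x] A0 B by simp
        then show ?thesis using A0 by simp
      qed
      finally show "(\<Sum>y\<in>B. c y B) = 1" .
    next
      fix y B assume B: "B \<subseteq> X" "y \<in> B"
      have eqA0: "mp x A0 = (\<Sum>S\<in>{S. A0 \<subseteq> S \<and> S \<subseteq> X}. F.Q x S)" by (rule F.P_eq[OF A0(1)])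
      have "\<exists>A1\<in>{S. A0 \<subseteq> S \<and> S \<subseteq> X}. F.Q x A1 > 0"
      proof (rule ccontr)
        assume "\<not> (\<exists>A1\<in>{S. A0 \<subseteq> S \<and> S \<subseteq> X}. F.Q x A1 > 0)"
        then have "\<And>S. S \<in> {S. A0 \<subseteq> S \<and> S \<subseteq> X} \<Longrightarrow> F.Q x S \<le> 0" by (simp add: not_less)
        then have "(\<Sum>S\<in>{S. A0 \<subseteq> S \<and> S \<subseteq> X}. F.Q x S) \<le> 0" by (rule sum_nonpos)
        then show False using A0(3) eqA0 by linarith
      qed
      then obtain A1 where A1: "A0 \<subseteq> A1" "A1 \<subseteq> X" "F.Q x A1 > 0" by blast
      have "mobius_inv X p x y A1 B = F.Q x A1 * (\<Sum>T\<in>{T. B \<subseteq> T \<and> T \<subseteq> X}. (-1) ^ card (T - B) * c y T)"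
      proof -
        have "mobius_inv X p x y A1 B =
            (\<Sum>A'\<in>{A'. A1 \<subseteq> A' \<and> A' \<subseteq> X}. \<Sum>B'\<in>{B'. B \<subseteq> B' \<and> B' \<subseteq> X}.
               ((-1) ^ card (A' - A1) * mp x A') * ((-1) ^ card (B' - B) * c y B'))"
          unfolding mobius_inv_def
        proof (intro sum.cong refl)
          fix A' B' assume A': "A' \<in> {A'. A1 \<subseteq> A' \<and> A' \<subseteq> X}" and B': "B' \<in> {B'. B \<subseteq> B' \<and> B' \<subseteq> X}"
          have "p x y A' B' = c y B' * mp x A'" by (rule pc) (use A' B' A1 A0 B in auto)
          then show "(-1) ^ (card (A' - A1) + card (B' - B)) * p x y A' B' =
              ((-1) ^ card (A' - A1) * mp x A') * ((-1) ^ card (B' - B) * c y B')"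
            by (simp add: power_add)
        qed
        also have "\<dots> = F.Q x A1 * (\<Sum>T\<in>{T. B \<subseteq> T \<and> T \<subseteq> X}. (-1) ^ card (T - B) * c y T)"
          by (simp add: F.Q_def sum_product)
        finally show ?thesis .
      qed
      moreover have "0 \<le> mobius_inv X p x y A1 B"
        by (rule CM[unfolded complete_monotonicity_def, rule_format]) (use A1 A0 B in auto)
      ultimately show "0 \<le> (\<Sum>T\<in>{T. B \<subseteq> T \<and> T \<subseteq> X}. (-1) ^ card (T - B) * c y T)"
        using A1(3) by (simp add: zero_le_mult_iff)
    qed
    obtain \<tau> where tau: "\<tau> \<in> distr (lin_orders X)" and tauP: "\<And>B y. B \<subseteq> X \<Longrightarrow> y \<in> B \<Longrightarrow> c y B = (\<Sum>r\<in>N_set X y B. \<tau> r)"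
      using G.falmagne by blast
    show ?thesis
    proof (intro exI conjI allI impI)
      show "\<tau> \<in> distr (lin_orders X)" by (rule tau)
      fix A B y assume "A \<subseteq> X" "B \<subseteq> X" "B \<noteq> {}" "x \<in> A" "y \<in> B"
      then show "p x y A B = mp x A * (\<Sum>r\<in>N_set X y B. \<tau> r)"
        using pc tauP by simp
    qed
  qed
  then obtain t where t: "\<And>x. x \<in> X \<Longrightarrow> t x \<in> distr (lin_orders X) \<and> (\<forall>A B y. A \<subseteq> X \<longrightarrow> B \<subseteq> X \<longrightarrow> B \<noteq> {} \<longrightarrow> x \<in> A \<longrightarrow> y \<in> B \<longrightarrow>
        p x y A B = mp x A * (\<Sum>r\<in>N_set X y B. t x r))"
    by metis
  show ?thesis
    unfolding state_indep_cdru_def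
  proof (intro exI conjI ballI)
    show "\<nu> \<in> distr (lin_orders X)" by (rule nu)
    fix x assume "x \<in> X" then show "t x \<in> distr (lin_orders X)" using t by blast
  next
    fix A B x y assume A: "A \<in> nonempty_subsets X" and B: "B \<in> nonempty_subsets X" and x: "x \<in> A" and y: "y \<in> B"
    have xX: "x \<in> X" using A x by auto
    have "p x y A B = mp x A * (\<Sum>r\<in>N_set X y B. t x r)" using t[OF xX] A B x y by auto
    also have "\<dots> = (\<Sum>r\<in>N_set X x A. \<nu> r) * (\<Sum>r\<in>N_set X y B. t x r)" using nuP[of A x] A x by auto
    finally show "p x y A B = (\<Sum>r\<in>N_set X x A. \<Sum>r'\<in>N_set X y B. \<nu> r * t x r')"
      by (simp add: sum_product)
  qed
qed


theorem theorem6: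
  fixes X :: "'a set" and p :: "'a \<Rightarrow> 'a \<Rightarrow> 'a set \<Rightarrow> 'a set \<Rightarrow> real"
  assumes "finite X"
    and "random_joint_choice_rule X p"
  shows "state_indep_cdru X p \<longleftrightarrow>
           complete_monotonicity X p \<and> marginality X p \<and> choice_set_independence X p"
  using only_if[OF assms] if_dir[OF assms] by blast

end
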